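(* Let $Y$ be lattice-valued with span $d$. Let $\tau_0>0$ be such that $h(\tau_0)\in(\beta_X,\infty)$ and $\inf_{s\in\mathbb{R}}E[e^{\tau_0Y+sX}]<1$. Suppose: (1) the law of $X$ is the sum of two nonnegative measures $\Phi,\Psi$ with $\Phi(\mathbb{R})>0$ and $\Phi$ having a density in $C^2(\mathbb{R})$; (2) there exist $k\in\mathbb{N}$ and $\eta_0>0$ such that $E|E[e^{is(Y_1+\cdots+Y_k)}\mid X_1+\cdots+X_k]|<1$ for all $s\in(0,\pi/d]$, and $E[e^{-h(\tau_0)X+\tau_0Y+\eta_0(|X|+|Y|)}]<\infty$; (3) $g(t,x),\partial_xg(t,x),\partial_x^2g(t,x)$ are continuous on $(\tau_0-\eta_0,\tau_0+\eta_0)\times\operatorname{sppt}(\Phi)^\circ$; (4) if $\Pr\{X\ge0\}<1$, then $E[e^{q(\tau_0Y-(0\wedge h(\tau_0))X)}\mid X>0]<\infty$ for all $q>0$. Then for all sufficiently large $x$, $W(x)$ is lattice-valued with span $d$.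
   Context: $(X_n,Y_n)_{n\ge1}$ are i.i.d. copies of $(X,Y)\in\mathbb{R}^2$; throughout $X,Y$ are nondegenerate and $\Pr\{\sup_{n\ge1}\sum_{i=1}^nX_i=\infty\}=1$. For $x\ge0$, $N(x)=\max\{n:\sum_{i=1}^kX_i\le x\ \forall k\le n\}$ if $X_1\le x$, else $N(x)=0$; $W(x)=\sum_{i=1}^{N(x)}Y_i$. A random variable $\xi$ has span $d>0$ if $d=\max\{t>0:\Pr\{\xi\in t\mathbb{Z}\}=1\}$. $g(t,x)=E[e^{tY}\mid X=x]$. $\mathcal{D}_t=\{s:E[e^{tY-sX}]\le1\}$, $h(t)=\inf\mathcal{D}_t$, $\beta_X=\limsup_{x\to\infty}\frac1x\log\Pr\{X>x\}$. $\operatorname{sppt}$ is support, $A^\circ$ interior. *)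

theory Defs
  imports "HOL-Probability.Probability"
begin

definition psum :: "(nat \<Rightarrow> 'a \<Rightarrow> real) \<Rightarrow> nat \<Rightarrow> 'a \<Rightarrow> real" where
  "psum Z n \<omega> = (\<Sum>i\<in>{1..n}. Z i \<omega>)"

definition firstN :: "(nat \<Rightarrow> 'a \<Rightarrow> real) \<Rightarrow> real \<Rightarrow> 'a \<Rightarrow> nat" where
  "firstN Xs x \<omega> = (if Xs 1 \<omega> \<le> x then (GREATEST n. \<forall>k\<in>{1..n}. psum Xs k \<omega> \<le> x) else 0)"

definition Wsum :: "(nat \<Rightarrow> 'a \<Rightarrow> real) \<Rightarrow> (nat \<Rightarrow> 'a \<Rightarrow> real) \<Rightarrow> real \<Rightarrow> 'a \<Rightarrow> real" where
  "Wsum Xs Ys x \<omega> = (\<Sum>i\<in>{1..firstN Xs x \<omega>}. Ys i \<omega>)"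

definition lattice_ok :: "'a measure \<Rightarrow> ('a \<Rightarrow> real) \<Rightarrow> real \<Rightarrow> bool" where
  "lattice_ok M \<xi> t \<longleftrightarrow> t > 0 \<and> (AE \<omega> in M. \<exists>k::int. \<xi> \<omega> = t * of_int k)"

definition has_span :: "'a measure \<Rightarrow> ('a \<Rightarrow> real) \<Rightarrow> real \<Rightarrow> bool" where
  "has_span M \<xi> d \<longleftrightarrow> lattice_ok M \<xi> d \<and> (\<forall>t. lattice_ok M \<xi> t \<longrightarrow> t \<le> d)"

definition Dset :: "'a measure \<Rightarrow> ('a \<Rightarrow> real) \<Rightarrow> ('a \<Rightarrow> real) \<Rightarrow> real \<Rightarrow> real set" where
  "Dset M X Y t = {s. (\<integral>\<^sup>+ \<omega>. ennreal (exp (t * Y \<omega> - s * X \<omega>)) \<partial>M) \<le> 1}"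

definition hfun :: "'a measure \<Rightarrow> ('a \<Rightarrow> real) \<Rightarrow> ('a \<Rightarrow> real) \<Rightarrow> real \<Rightarrow> ereal" where
  "hfun M X Y t = Inf (ereal ` Dset M X Y t)"

definition betaX :: "'a measure \<Rightarrow> ('a \<Rightarrow> real) \<Rightarrow> ereal" where
  "betaX M X = Limsup at_top (\<lambda>x::real.
      if measure M {\<omega> \<in> space M. X \<omega> > x} = 0 then -\<infinity>
      else ereal (ln (measure M {\<omega> \<in> space M. X \<omega> > x}) / x))"

definition msupport :: "real measure \<Rightarrow> real set" where
  "msupport \<Phi> = {x. \<forall>e>0. emeasure \<Phi> (ball x e) > 0}"

definition cond_exp_event :: "'a measure \<Rightarrow> ('a \<Rightarrow> real) \<Rightarrow> 'a set \<Rightarrow> ennreal" where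
  "cond_exp_event M f A = (\<integral>\<^sup>+ \<omega>. indicator A \<omega> * ennreal (f \<omega>) \<partial>M) / emeasure M A"

definition cond_version :: "'a measure \<Rightarrow> ('a \<Rightarrow> real) \<Rightarrow> ('a \<Rightarrow> real) \<Rightarrow> (real \<Rightarrow> real) \<Rightarrow> bool" where
  "cond_version M X f g \<longleftrightarrow> g \<in> borel_measurable borel \<and> (AE \<omega> in M. g (X \<omega>) \<ge> 0) \<and>
     (\<forall>A\<in>sets borel.
        (\<integral>\<^sup>+ \<omega>. indicator (X -` A \<inter> space M) \<omega> * ennreal (f \<omega>) \<partial>M) =
        (\<integral>\<^sup>+ \<omega>. indicator (X -` A \<inter> space M) \<omega> * ennreal (g (X \<omega>)) \<partial>M))"

end

theory Submission
  imports Defs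
begin

lemma Greatest_nat_alt:
  "Greatest (P::nat\<Rightarrow>bool) = (if finite {n. P n} \<and> {n. P n} \<noteq> {} then Max {n. P n} else (THE x::nat. False))"
proof (cases "finite {n. P n} \<and> {n. P n} \<noteq> {}")
  case True
  then show ?thesis
    by (auto intro!: Greatest_equality Max_ge Max_in[of "{n. P n}", simplified])
next
  case False
  have "(\<lambda>x. P x \<and> (\<forall>y. P y \<longrightarrow> y \<le> x)) = (\<lambda>x. False)"
  proof (rule ext)
    fix x show "(P x \<and> (\<forall>y. P y \<longrightarrow> y \<le> x)) = False"
      using False finite_nat_set_iff_bounded_le[of "{n. P n}"] by auto
  qed
  then have "Greatest P = (THE x::nat. False)" unfolding Greatest_def by simp
  then show ?thesis using False by (simp only: if_False)
qed

lemma psum_measurable[measurable]: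
  assumes [measurable]: "\<And>i. Z i \<in> borel_measurable N"
  shows "psum Z n \<in> borel_measurable N"
  unfolding psum_def by measurable

lemma firstN_measurable:
  assumes [measurable]: "\<And>i. Z i \<in> borel_measurable N" and [measurable]: "y \<in> borel_measurable N"
  shows "(\<lambda>\<omega>. firstN Z (y \<omega>) \<omega>) \<in> measurable N (count_space UNIV)"
proof -
  define S where "S = (\<lambda>\<omega>. {n. \<forall>k. 1 \<le> k \<and> k \<le> n \<longrightarrow> psum Z k \<omega> \<le> y \<omega>})"
  have Pm[measurable]: "Measurable.pred N (\<lambda>\<omega>. \<forall>k. 1 \<le> k \<and> k \<le> n \<longrightarrow> psum Z k \<omega> \<le> y \<omega>)" for n
    by measurable
  have Sm: "{x \<in> space N. n \<in> S x} \<in> sets N" for n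
    unfolding S_def using Pm[of n] by simp
  have fin[measurable]: "Measurable.pred N (\<lambda>\<omega>. finite (S \<omega>))"
    by (rule measurable_finite) (rule Sm)
  have eq: "(\<lambda>\<omega>. firstN Z (y \<omega>) \<omega>) = (\<lambda>\<omega>. if Z 1 \<omega> \<le> y \<omega> then
     (if finite (S \<omega>) then Max {n. \<forall>k. 1 \<le> k \<and> k \<le> n \<longrightarrow> psum Z k \<omega> \<le> y \<omega>} else (THE x::nat. False)) else 0)"
  proof (rule ext)
    fix \<omega>
    have ne: "S \<omega> \<noteq> {}"
    proof -
      have "(0::nat) \<in> S \<omega>" unfolding S_def by simp
      then show ?thesis by blast
    qed
    have "(\<lambda>n. \<forall>k\<in>{1..n}. psum Z k \<omega> \<le> y \<omega>) = (\<lambda>n. n \<in> S \<omega>)"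
      unfolding S_def by auto
    then show "firstN Z (y \<omega>) \<omega> = (if Z 1 \<omega> \<le> y \<omega> then
     (if finite (S \<omega>) then Max {n. \<forall>k. 1 \<le> k \<and> k \<le> n \<longrightarrow> psum Z k \<omega> \<le> y \<omega>} else (THE x::nat. False)) else 0)"
      unfolding firstN_def Greatest_nat_alt using ne by (simp add: S_def)
  qed
  have m1: "(\<lambda>\<omega>. Max {n. \<forall>k. 1 \<le> k \<and> k \<le> n \<longrightarrow> psum Z k \<omega> \<le> y \<omega>}) \<in> measurable N (count_space UNIV)"
    by (rule measurable_Max_nat) (rule Pm)
  have m0: "Measurable.pred N (\<lambda>\<omega>. Z 1 \<omega> \<le> y \<omega>)" by measurable
  show ?thesis unfolding eq
    by (intro measurable_If m1 measurable_const m0 fin) auto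
qed

lemma Wsum_measurable:
  assumes [measurable]: "\<And>i. Z i \<in> borel_measurable N" "\<And>i. U i \<in> borel_measurable N"
    and [measurable]: "y \<in> borel_measurable N"
  shows "(\<lambda>\<omega>. Wsum Z U (y \<omega>) \<omega>) \<in> borel_measurable N"
proof -
  have "(\<lambda>\<omega>. (\<lambda>n \<omega>. \<Sum>i\<in>{1..n}. U i \<omega>) (firstN Z (y \<omega>) \<omega>) \<omega>) \<in> borel_measurable N"
    by (rule measurable_compose_countable[OF _ firstN_measurable]) (auto)
  then show ?thesis unfolding Wsum_def by simp
qed

lemma lattice_set_borel: "{x \<in> space borel. \<exists>k::int. x = (d::real) * of_int k} \<in> sets borel"
proof -
  have "{x \<in> space borel. \<exists>k::int. x = d * of_int k} = (\<Union>k::int. {d * of_int k})" by auto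
  also have "\<dots> \<in> sets borel" by (rule sets.countable_UN) auto
  finally show ?thesis .
qed

lemma Ys_lattice:
  fixes Xs Ys :: "nat \<Rightarrow> 'a \<Rightarrow> real" and X Y :: "'a \<Rightarrow> real"
  assumes P: "prob_space M" and Y_meas: "Y \<in> borel_measurable M"
    and X_meas: "X \<in> borel_measurable M"
    and Xs_meas: "\<And>i. Xs i \<in> borel_measurable M" and Ys_meas: "\<And>i. Ys i \<in> borel_measurable M"
    and ident: "\<And>i. i \<ge> 1 \<Longrightarrow>
        distr M borel (\<lambda>\<omega>. (Xs i \<omega>, Ys i \<omega>)) = distr M borel (\<lambda>\<omega>. (X \<omega>, Y \<omega>))"
    and lat: "AE \<omega> in M. \<exists>k::int. Y \<omega> = d * of_int k"
  shows "AE \<omega> in M. \<forall>i\<in>{1..}. \<exists>k::int. Ys i \<omega> = d * of_int k"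
proof -
  have "\<forall>i\<in>{1..}. AE \<omega> in M. \<exists>k::int. Ys i \<omega> = d * of_int k"
  proof
    fix i :: nat assume "i \<in> {1..}"
    then have i: "i \<ge> 1" by simp
    have [measurable]: "Xs i \<in> borel_measurable M" "Ys i \<in> borel_measurable M" by (rule Xs_meas Ys_meas)+
    have [measurable]: "snd \<in> borel_measurable (borel :: (real \<times> real) measure)"
      by (intro borel_measurable_continuous_onI continuous_intros)
    have "distr M borel (Ys i) = distr (distr M borel (\<lambda>\<omega>. (Xs i \<omega>, Ys i \<omega>))) borel snd"
      by (subst distr_distr) (auto simp: comp_def)
    also have "\<dots> = distr (distr M borel (\<lambda>\<omega>. (X \<omega>, Y \<omega>))) borel snd" using ident[OF i] by simp
    also have "\<dots> = distr M borel Y"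
      using X_meas Y_meas by (subst distr_distr) (auto simp: comp_def)
    finally have eq: "distr M borel (Ys i) = distr M borel Y" .
    have "AE x in distr M borel Y. \<exists>k::int. x = d * of_int k"
      using lat Y_meas by (subst AE_distr_iff) (auto intro: lattice_set_borel)
    then have "AE x in distr M borel (Ys i). \<exists>k::int. x = d * of_int k" by (simp only: eq)
    then show "AE \<omega> in M. \<exists>k::int. Ys i \<omega> = d * of_int k"
      by (subst (asm) AE_distr_iff) (auto intro: lattice_set_borel)
  qed
  then show ?thesis by (subst AE_ball_countable) auto
qed

lemma sum_lattice:
  assumes "\<forall>i\<in>A. \<exists>k::int. f i = d * of_int k"
  shows "\<exists>k::int. (\<Sum>i\<in>A. f i) = (d::real) * of_int k"
proof -
  from assms obtain g where g: "\<forall>i\<in>A. f i = d * of_int (g i)" by metis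
  then have "(\<Sum>i\<in>A. f i) = d * of_int (\<Sum>i\<in>A. g i)"
    by (simp add: sum_distrib_left)
  then show ?thesis by blast
qed

lemma W_lattice:
  assumes "AE \<omega> in M. \<forall>i\<in>{1..}. \<exists>k::int. Ys i \<omega> = d * of_int k"
  shows "AE \<omega> in M. \<exists>k::int. Wsum Xs Ys x \<omega> = d * of_int k"
  using assms
proof eventually_elim
  case (elim \<omega>)
  then show ?case unfolding Wsum_def by (intro sum_lattice) auto
qed

lemma span_multiple:
  fixes W :: "'a \<Rightarrow> real"
  assumes d: "d > 0" and t: "t > d" and Wt: "AE \<omega> in M. \<exists>k::int. W \<omega> = t * of_int k"
    and Wd: "AE \<omega> in M. \<exists>k::int. W \<omega> = d * of_int k"
  shows "\<exists>s. pi / (2 * d) \<le> s \<and> s \<le> pi / d \<and> (AE \<omega> in M. cos (s * W \<omega>) = 1)"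
proof -
  define u where "u = 2 * pi / t"
  define v where "v = 2 * pi / d"
  define u' where "u' = (if u \<le> pi / d then u else v - u)"
  have tpos: "t > 0" using d t by simp
  have u_pos: "u > 0" unfolding u_def using tpos by simp
  have u_lt: "u < v" unfolding u_def v_def using d t by (simp add: frac_less2)
  have u'_pos: "u' > 0" "u' \<le> pi / d"
  proof -
    have "2 * pi / d = pi / d + pi / d" by simp
    then show "u' > 0" "u' \<le> pi / d"
      using u_pos u_lt unfolding u'_def v_def by auto
  qed
  define m :: nat where "m = (if u' \<le> pi / (2 * d) then nat \<lceil>pi / (2 * d * u')\<rceil> else 1)"
  define s where "s = real m * u'"
  have s_bounds: "pi / (2 * d) \<le> s \<and> s \<le> pi / d"
  proof (cases "u' \<le> pi / (2 * d)")
    case True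
    define a where "a = pi / (2 * d * u')"
    have apos: "a > 0" unfolding a_def using d u'_pos by simp
    have c: "real m = of_int \<lceil>a\<rceil>"
      using True apos unfolding m_def a_def by simp
    have c1: "of_int \<lceil>a\<rceil> \<ge> a" by (rule le_of_int_ceiling)
    have c2: "of_int \<lceil>a\<rceil> < a + 1" by linarith
    have "s \<ge> a * u'" unfolding s_def c using c1 u'_pos by (simp add: mult_right_mono)
    moreover have "a * u' = pi / (2 * d)" unfolding a_def using u'_pos by simp
    ultimately have g1: "pi / (2 * d) \<le> s" by linarith
    have "s \<le> (a + 1) * u'" unfolding s_def c using c2 u'_pos by (simp add: mult_right_mono)
    moreover have "(a + 1) * u' = pi / (2 * d) + u'" unfolding a_def using u'_pos by (simp add: algebra_simps)
    moreover have "pi / (2 * d) + pi / (2 * d) = pi / d" by simp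
    moreover note True
    ultimately have g2: "s \<le> pi / d" by linarith
    from g1 g2 show ?thesis by simp
  next
    case False
    then show ?thesis using u'_pos unfolding s_def m_def by simp
  qed
  have key: "AE \<omega> in M. \<exists>n::int. s * W \<omega> = 2 * pi * of_int n"
    using Wt Wd
  proof eventually_elim
    case (elim \<omega>)
    then obtain k1 k2 :: int where k1: "W \<omega> = t * k1" and k2: "W \<omega> = d * k2" by blast
    have uW: "u * W \<omega> = 2 * pi * k1" unfolding u_def k1 using tpos by simp
    have vW: "v * W \<omega> = 2 * pi * k2" unfolding v_def k2 using d by simp
    obtain n :: int where n: "u' * W \<omega> = 2 * pi * n"
    proof (cases "u \<le> pi / d")
      case True then show ?thesis using that uW unfolding u'_def by auto
    next
      case False
      then have "u' * W \<omega> = 2 * pi * of_int (k2 - k1)" unfolding u'_def using uW vW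
        by (simp add: algebra_simps)
      then show ?thesis using that by blast
    qed
    have "s * W \<omega> = 2 * pi * of_int (int m * n)" unfolding s_def
      by (simp add: mult.assoc n)
    then show ?case by blast
  qed
  have "AE \<omega> in M. cos (s * W \<omega>) = 1"
    using key by eventually_elim (metis cos_int_2pin)
  then show ?thesis using s_bounds by blast
qed

lemma psum_cong:
  assumes "\<And>i. i \<ge> 1 \<Longrightarrow> Z i \<omega> = Z' i \<omega>'"
  shows "psum Z n \<omega> = psum Z' n \<omega>'"
  unfolding psum_def using assms by (intro sum.cong) auto

lemma Wsum_cong:
  assumes "\<And>i. i \<ge> 1 \<Longrightarrow> Z i \<omega> = Z' i \<omega>'" "\<And>i. i \<ge> 1 \<Longrightarrow> U i \<omega> = U' i \<omega>'"
  shows "Wsum Z U y \<omega> = Wsum Z' U' y \<omega>'"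
proof -
  have f: "firstN Z y \<omega> = firstN Z' y \<omega>'"
  proof -
    have "\<And>n. psum Z n \<omega> = psum Z' n \<omega>'" by (rule psum_cong) (rule assms(1))
    then show ?thesis unfolding firstN_def using assms(1)[of 1] by simp
  qed
  show ?thesis unfolding Wsum_def f using assms(2) by (intro sum.cong) auto
qed

lemma firstN_Greatest:
  assumes "psum Xs n0 \<omega> > x"
  shows "firstN Xs x \<omega> = (GREATEST n. \<forall>j\<in>{1..n}. psum Xs j \<omega> \<le> x)"
proof (cases "Xs 1 \<omega> \<le> x")
  case True then show ?thesis unfolding firstN_def by simp
next
  case False
  have p1: "psum Xs 1 \<omega> = Xs 1 \<omega>" unfolding psum_def by simp
  have "(GREATEST n. \<forall>j\<in>{1..n}. psum Xs j \<omega> \<le> x) = 0"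
  proof (rule Greatest_equality)
    show "\<forall>j\<in>{1..0}. psum Xs j \<omega> \<le> x" by simp
    fix y assume "\<forall>j\<in>{1..y}. psum Xs j \<omega> \<le> x"
    show "y \<le> 0"
    proof (rule ccontr)
      assume "\<not> y \<le> 0"
      then have "1 \<in> {1..y}" by simp
      then show False using \<open>\<forall>j\<in>{1..y}. psum Xs j \<omega> \<le> x\<close> False p1 by force
    qed
  qed
  then show ?thesis using False unfolding firstN_def by simp
qed

lemma psum_shift:
  "psum (\<lambda>i. Z (k + i)) m \<omega> = psum Z (k + m) \<omega> - psum Z k \<omega>"
proof -
  have "psum Z (k + m) \<omega> = psum Z k \<omega> + (\<Sum>i\<in>{k+1..k+m}. Z i \<omega>)"
    unfolding psum_def by (rule sum.ub_add_nat) simp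
  also have "(\<Sum>i\<in>{k+1..k+m}. Z i \<omega>) = (\<Sum>i\<in>{1..m}. Z (k + i) \<omega>)"
    using sum.shift_bounds_cl_nat_ivl[of "\<lambda>i. Z i \<omega>" 1 k m] by (simp add: add.commute)
  finally show ?thesis unfolding psum_def by simp
qed

lemma Wsum_split:
  assumes B: "\<forall>j\<in>{1..k}. psum Xs j \<omega> \<le> x" and n0: "psum Xs n0 \<omega> > x" "n0 \<ge> 1"
  shows "Wsum Xs Ys x \<omega> = psum Ys k \<omega> + Wsum (\<lambda>i. Xs (k + i)) (\<lambda>i. Ys (k + i)) (x - psum Xs k \<omega>) \<omega>"
proof -
  define P where "P = (\<lambda>n. \<forall>j\<in>{1..n}. psum Xs j \<omega> \<le> x)"
  define P' where "P' = (\<lambda>m. \<forall>j\<in>{1..m}. psum (\<lambda>i. Xs (k + i)) j \<omega> \<le> x - psum Xs k \<omega>)"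
  have Pb: "P n \<Longrightarrow> n < n0" for n
  proof (rule ccontr)
    assume "P n" "\<not> n < n0"
    then have "n0 \<in> {1..n}" using n0 by auto
    then show False using \<open>P n\<close> n0 unfolding P_def by force
  qed
  have eqP: "P (k + m) \<longleftrightarrow> P' m" for m
  proof
    assume "P (k + m)"
    then show "P' m" unfolding P_def P'_def psum_shift by auto
  next
    assume a: "P' m"
    show "P (k + m)" unfolding P_def
    proof
      fix j assume j: "j \<in> {1..k + m}"
      show "psum Xs j \<omega> \<le> x"
      proof (cases "j \<le> k")
        case True then show ?thesis using B j by auto
      next
        case False
        then have "j - k \<in> {1..m}" "k + (j - k) = j" using j by auto
        then show ?thesis using a unfolding P'_def psum_shift by force
      qed
    qed
  qed
  have P'b: "P' m \<Longrightarrow> m \<le> n0" for m using Pb[of "k+m"] eqP by auto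
  have P'0: "P' 0" unfolding P'_def by simp
  define g where "g = Greatest P'"
  have Pg: "P' g" unfolding g_def by (rule GreatestI_nat[of P' 0 n0, OF P'0 P'b])
  have gmax: "P' m \<Longrightarrow> m \<le> g" for m unfolding g_def by (rule Greatest_le_nat[of P' m n0, OF _ P'b])
  have "\<not> P' n0" using P'b[of n0] Pb[of "k + n0"] eqP by auto
  then obtain j where j: "j \<in> {1..n0}" "psum (\<lambda>i. Xs (k + i)) j \<omega> > x - psum Xs k \<omega>"
    unfolding P'_def by (auto simp: not_le)
  have ft: "firstN (\<lambda>i. Xs (k + i)) (x - psum Xs k \<omega>) \<omega> = g"
    unfolding firstN_Greatest[OF j(2)] g_def P'_def ..
  have GP: "Greatest P = k + g"
  proof (rule Greatest_equality)
    show "P (k + g)" using eqP Pg by simp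
    fix y assume "P y"
    show "y \<le> k + g"
    proof (cases "y \<le> k")
      case True then show ?thesis by simp
    next
      case False
      then have "P (k + (y - k))" using \<open>P y\<close> by simp
      then have "y - k \<le> g" using eqP gmax by blast
      then show ?thesis by simp
    qed
  qed
  have f: "firstN Xs x \<omega> = k + g"
    using firstN_Greatest[OF n0(1)] GP unfolding P_def by simp
  have "Wsum Xs Ys x \<omega> = (\<Sum>i\<in>{1..k+g}. Ys i \<omega>)" unfolding Wsum_def f ..
  also have "\<dots> = psum Ys k \<omega> + psum (\<lambda>i. Ys (k + i)) g \<omega>"
    using psum_shift[of Ys k g \<omega>] unfolding psum_def by simp
  also have "psum (\<lambda>i. Ys (k + i)) g \<omega> = Wsum (\<lambda>i. Xs (k + i)) (\<lambda>i. Ys (k + i)) (x - psum Xs k \<omega>) \<omega>"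
    unfolding Wsum_def ft unfolding psum_def ..
  finally show ?thesis .
qed

lemma indep_subst:
  fixes f :: "'b \<Rightarrow> 'b \<Rightarrow> real"
  assumes P: "prob_space M" and ind: "prob_space.indep_var M N1 V N2 T"
    and fm: "(\<lambda>p. f (fst p) (snd p)) \<in> borel_measurable (N1 \<Otimes>\<^sub>M N2)"
    and bnd: "\<And>a b. \<bar>f a b\<bar> \<le> C"
  shows "(\<integral>\<omega>. f (V \<omega>) (T \<omega>) \<partial>M) = (\<integral>\<omega>. (\<integral>\<omega>'. f (V \<omega>) (T \<omega>') \<partial>M) \<partial>M)"
proof -
  interpret prob_space M by (rule P)
  have rv: "V \<in> measurable M N1" "T \<in> measurable M N2"
    and deq: "distr M N1 V \<Otimes>\<^sub>M distr M N2 T = distr M (N1 \<Otimes>\<^sub>M N2) (\<lambda>x. (V x, T x))"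
    using ind unfolding indep_var_distribution_eq by auto
  interpret PV: prob_space "distr M N1 V" by (rule prob_space_distr) (rule rv(1))
  interpret PT: prob_space "distr M N2 T" by (rule prob_space_distr) (rule rv(2))
  interpret PVT: pair_prob_space "distr M N1 V" "distr M N2 T" ..
  have sets_eq: "sets (distr M N1 V \<Otimes>\<^sub>M distr M N2 T) = sets (N1 \<Otimes>\<^sub>M N2)"
    by (intro sets_pair_measure_cong) auto
  have fm': "(\<lambda>p. f (fst p) (snd p)) \<in> borel_measurable (distr M N1 V \<Otimes>\<^sub>M distr M N2 T)"
    using fm by (subst measurable_cong_sets[OF sets_eq refl])
  have fm'': "case_prod f \<in> borel_measurable (distr M N1 V \<Otimes>\<^sub>M distr M N2 T)"
    using fm' by (simp add: case_prod_beta')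
  have int: "integrable (distr M N1 V \<Otimes>\<^sub>M distr M N2 T) (case_prod f)"
    using bnd fm'' by (intro PVT.integrable_const_bound[where B=C]) (auto simp: case_prod_beta')
  have pm: "(\<lambda>x. (V x, T x)) \<in> measurable M (N1 \<Otimes>\<^sub>M N2)" using rv by (rule measurable_Pair)
  have "(\<integral>\<omega>. f (V \<omega>) (T \<omega>) \<partial>M) = integral\<^sup>L (distr M (N1 \<Otimes>\<^sub>M N2) (\<lambda>x. (V x, T x))) (case_prod f)"
    using fm pm by (subst integral_distr) (auto simp: case_prod_beta')
  also have "\<dots> = integral\<^sup>L (distr M N1 V \<Otimes>\<^sub>M distr M N2 T) (case_prod f)" using deq by simp
  also have "\<dots> = (\<integral>v. (\<integral>\<tau>. f v \<tau> \<partial>distr M N2 T) \<partial>distr M N1 V)"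
    using PVT.integral_fst'[OF int] by simp
  also have "\<dots> = (\<integral>\<omega>. (\<integral>\<tau>. f (V \<omega>) \<tau> \<partial>distr M N2 T) \<partial>M)"
  proof (rule integral_distr[OF rv(1)])
    have "(\<lambda>v. \<integral>\<tau>. f v \<tau> \<partial>distr M N2 T) \<in> borel_measurable (distr M N1 V)"
      using fm'' by (rule PT.borel_measurable_lebesgue_integral)
    then show "(\<lambda>v. \<integral>\<tau>. f v \<tau> \<partial>distr M N2 T) \<in> borel_measurable N1"
    proof -
      have e: "borel_measurable (distr M N1 V) = borel_measurable N1"
        by (rule measurable_cong_sets) auto
      from \<open>(\<lambda>v. \<integral>\<tau>. f v \<tau> \<partial>distr M N2 T) \<in> borel_measurable (distr M N1 V)\<close>
      show ?thesis unfolding e .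
    qed
  qed
  also have "\<dots> = (\<integral>\<omega>. (\<integral>\<omega>'. f (V \<omega>) (T \<omega>') \<partial>M) \<partial>M)"
  proof (rule Bochner_Integration.integral_cong)
    show "M = M" ..
  next
    fix \<omega> assume "\<omega> \<in> space M"
    then have vin: "V \<omega> \<in> space N1" using rv(1) by (simp add: measurable_space)
    have "(\<lambda>\<tau>. (V \<omega>, \<tau>)) \<in> measurable N2 (N1 \<Otimes>\<^sub>M N2)"
      by (rule measurable_Pair[OF measurable_const[OF vin] measurable_ident_sets]) simp
    from measurable_compose[OF this fm]
    have "(\<lambda>\<tau>. f (V \<omega>) \<tau>) \<in> borel_measurable N2" by simp
    then show "(\<integral>\<tau>. f (V \<omega>) \<tau> \<partial>distr M N2 T) = (\<integral>\<omega>'. f (V \<omega>) (T \<omega>') \<partial>M)"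
      by (rule integral_distr[OF rv(2)])
  qed
  finally show ?thesis .
qed

lemma CS2: "a * c + b * e \<le> sqrt (a\<^sup>2 + b\<^sup>2) * sqrt (c\<^sup>2 + e\<^sup>2)"
proof -
  have id: "(a * c + b * e)\<^sup>2 + (a * e - b * c)\<^sup>2 = (a\<^sup>2 + b\<^sup>2) * (c\<^sup>2 + e\<^sup>2)"
    by (simp add: power2_eq_square) algebra
  have "(a * e - b * c)\<^sup>2 \<ge> 0" by simp
  then have "(a * c + b * e)\<^sup>2 \<le> (a\<^sup>2 + b\<^sup>2) * (c\<^sup>2 + e\<^sup>2)" using id by linarith
  then have "\<bar>a * c + b * e\<bar> \<le> sqrt ((a\<^sup>2 + b\<^sup>2) * (c\<^sup>2 + e\<^sup>2))"
    by (metis real_sqrt_abs real_sqrt_le_mono)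
  then show ?thesis by (simp add: real_sqrt_mult)
qed

lemma sq_int_le1:
  fixes A B :: "'a \<Rightarrow> real"
  assumes P: "prob_space M" and [measurable]: "A \<in> borel_measurable M" "B \<in> borel_measurable M"
    and one: "\<And>\<omega>. (A \<omega>)\<^sup>2 + (B \<omega>)\<^sup>2 = 1"
  shows "(\<integral>\<omega>. A \<omega> \<partial>M)\<^sup>2 + (\<integral>\<omega>. B \<omega> \<partial>M)\<^sup>2 \<le> 1"
proof -
  interpret prob_space M by (rule P)
  have bA: "\<bar>A \<omega>\<bar> \<le> 1" for \<omega>
  proof -
    have "(A \<omega>)\<^sup>2 \<le> 1" using one[of \<omega>] zero_le_power2[of "B \<omega>"] by linarith
    then show ?thesis by (simp add: abs_square_le_1)
  qed
  have bB: "\<bar>B \<omega>\<bar> \<le> 1" for \<omega>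
  proof -
    have "(B \<omega>)\<^sup>2 \<le> 1" using one[of \<omega>] zero_le_power2[of "A \<omega>"] by linarith
    then show ?thesis by (simp add: abs_square_le_1)
  qed
  have iA: "integrable M A" using bA by (intro integrable_const_bound[where B=1]) auto
  have iB: "integrable M B" using bB by (intro integrable_const_bound[where B=1]) auto
  define a where "a = (\<integral>\<omega>. A \<omega> \<partial>M)"
  define b where "b = (\<integral>\<omega>. B \<omega> \<partial>M)"
  define r where "r = sqrt (a\<^sup>2 + b\<^sup>2)"
  have "a\<^sup>2 + b\<^sup>2 = (\<integral>\<omega>. a * A \<omega> + b * B \<omega> \<partial>M)"
    using iA iB unfolding a_def b_def by (simp add: power2_eq_square)
  also have "\<dots> \<le> (\<integral>\<omega>. r \<partial>M)"
  proof (rule integral_mono)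
    show "integrable M (\<lambda>\<omega>. a * A \<omega> + b * B \<omega>)" using iA iB by simp
    show "integrable M (\<lambda>\<omega>. r)" by simp
    fix \<omega> show "a * A \<omega> + b * B \<omega> \<le> r" using CS2[of a "A \<omega>" b "B \<omega>"] one[of \<omega>] unfolding r_def by simp
  qed
  also have "\<dots> = r" by (simp add: prob_space)
  finally have "r\<^sup>2 \<le> r" unfolding r_def by simp
  then have rr: "r * r \<le> r" by (simp add: power2_eq_square)
  have "r \<le> 1"
  proof (rule ccontr)
    assume "\<not> r \<le> 1"
    then have "r * 1 < r * r" by (intro mult_strict_left_mono) auto
    then show False using rr by simp
  qed
  then have "r\<^sup>2 \<le> 1" using r_def by (simp add: power_le_one)
  then show ?thesis unfolding r_def a_def b_def by simp
qed

lemma keybound: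
  fixes M :: "'a measure" and Xs Ys :: "nat \<Rightarrow> 'a \<Rightarrow> real" and k :: nat and x s :: real
  assumes P: "prob_space M"
    and Xs_meas[measurable]: "\<And>i. Xs i \<in> borel_measurable M"
    and Ys_meas[measurable]: "\<And>i. Ys i \<in> borel_measurable M"
    and indep: "prob_space.indep_vars M (\<lambda>_. borel) (\<lambda>i \<omega>. (Xs i \<omega>, Ys i \<omega>)) {1..}"
    and drift: "AE \<omega> in M. (SUP n\<in>{1..}. ereal (psum Xs n \<omega>)) = \<infinity>"
    and cosW: "AE \<omega> in M. cos (s * Wsum Xs Ys x \<omega>) = 1"
  shows "1 - 2 * measure M {\<omega> \<in> space M. \<not> (\<forall>j\<in>{1..k}. psum Xs j \<omega> \<le> x)} \<le>
    (\<integral>\<omega>. cmod (Complex (real_cond_exp M (vimage_algebra (space M) (psum Xs k) borel) (\<lambda>\<omega>. cos (s * psum Ys k \<omega>)) \<omega>)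
                       (real_cond_exp M (vimage_algebra (space M) (psum Xs k) borel) (\<lambda>\<omega>. sin (s * psum Ys k \<omega>)) \<omega>)) \<partial>M)"
proof -
  interpret prob_space M by (rule P)
  define G where "G = vimage_algebra (space M) (psum Xs k) borel"
  have subG: "subalgebra M G"
  proof -
    have "psum Xs k \<in> borel_measurable M" by measurable
    then have "sets G \<subseteq> sets M" unfolding G_def by (intro sets_image_in_sets) auto
    then show ?thesis unfolding subalgebra_def G_def by simp
  qed
  interpret G: sigma_finite_subalgebra M G
    by (rule finite_measure_subalgebra_is_sigma_finite) (unfold_locales, rule subG)
  define SX where "SX = psum Xs k"
  define SY where "SY = psum Ys k"
  have [measurable]: "SX \<in> borel_measurable M" "SY \<in> borel_measurable M"
    unfolding SX_def SY_def by measurable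
  have SXG: "SX \<in> borel_measurable G" unfolding G_def SX_def
    by (rule measurable_vimage_algebra1) simp
  define Zs where "Zs = (\<lambda>i \<omega>. if i = 0 then 0 else Xs (k + i) \<omega>)"
  define Us where "Us = (\<lambda>i \<omega>. if i = 0 then 0 else Ys (k + i) \<omega>)"
  have Zs_m[measurable]: "Zs i \<in> borel_measurable M" "Us i \<in> borel_measurable M" for i
    unfolding Zs_def Us_def by auto
  define Wt where "Wt = (\<lambda>y \<omega>. Wsum Zs Us y \<omega>)"
  define u1 where "u1 = (\<lambda>a. \<integral>\<omega>. cos (s * Wt (x - a) \<omega>) \<partial>M)"
  define u2 where "u2 = (\<lambda>a. \<integral>\<omega>. sin (s * Wt (x - a) \<omega>) \<partial>M)"
  define Bc where "Bc = {\<omega> \<in> space M. \<not> (\<forall>j\<in>{1..k}. psum Xs j \<omega> \<le> x)}"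
  have Bc_sets[measurable]: "Bc \<in> sets M" unfolding Bc_def by measurable
  have Wt_m2: "(\<lambda>p. Wt (x - fst p) (snd p)) \<in> borel_measurable (borel \<Otimes>\<^sub>M M)"
  proof -
    have "(\<lambda>p. Wsum (\<lambda>i p. Zs i (snd p)) (\<lambda>i p. Us i (snd p)) (x - fst p) p) \<in> borel_measurable (borel \<Otimes>\<^sub>M M)"
      by (rule Wsum_measurable) auto
    moreover have "Wsum (\<lambda>i p. Zs i (snd p)) (\<lambda>i p. Us i (snd p)) (x - fst p) p = Wt (x - fst p) (snd p)" for p
      unfolding Wt_def by (rule Wsum_cong) auto
    ultimately show ?thesis by simp
  qed
  have Wt_m1: "(\<lambda>\<omega>. Wt (x - SX \<omega>) \<omega>) \<in> borel_measurable M"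
    unfolding Wt_def by (rule Wsum_measurable) auto
  have u1_m[measurable]: "u1 \<in> borel_measurable borel" unfolding u1_def
  proof (rule borel_measurable_lebesgue_integral[where f="\<lambda>a \<omega>. cos (s * Wt (x - a) \<omega>)"])
    show "(\<lambda>(a, \<omega>). cos (s * Wt (x - a) \<omega>)) \<in> borel_measurable (borel \<Otimes>\<^sub>M M)"
      using Wt_m2 by (simp add: case_prod_beta')
  qed
  have u2_m[measurable]: "u2 \<in> borel_measurable borel" unfolding u2_def
  proof (rule borel_measurable_lebesgue_integral[where f="\<lambda>a \<omega>. sin (s * Wt (x - a) \<omega>)"])
    show "(\<lambda>(a, \<omega>). sin (s * Wt (x - a) \<omega>)) \<in> borel_measurable (borel \<Otimes>\<^sub>M M)"
      using Wt_m2 by (simp add: case_prod_beta')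
  qed
  have usq: "(u1 a)\<^sup>2 + (u2 a)\<^sup>2 \<le> 1" for a
    unfolding u1_def u2_def
  proof (rule sq_int_le1[OF P])
    have "(\<lambda>\<omega>. Wt (x - a) \<omega>) \<in> borel_measurable M" unfolding Wt_def by (rule Wsum_measurable) auto
    then show "(\<lambda>\<omega>. cos (s * Wt (x - a) \<omega>)) \<in> borel_measurable M" "(\<lambda>\<omega>. sin (s * Wt (x - a) \<omega>)) \<in> borel_measurable M"
      by measurable
  qed simp
  have u1b: "\<bar>u1 a\<bar> \<le> 1" and u2b: "\<bar>u2 a\<bar> \<le> 1" for a
  proof -
    show "\<bar>u1 a\<bar> \<le> 1" using usq[of a] zero_le_power2[of "u2 a"] abs_square_le_1[of "u1 a"] by linarith
    show "\<bar>u2 a\<bar> \<le> 1" using usq[of a] zero_le_power2[of "u1 a"] abs_square_le_1[of "u2 a"] by linarith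
  qed
  define L where "L = (\<integral>\<omega>. cos (s * (SY \<omega> + Wt (x - SX \<omega>) \<omega>)) \<partial>M)"
  have E1: "1 - 2 * measure M Bc \<le> L"
  proof -
    have dn: "AE \<omega> in M. \<exists>n\<in>{1..}. x < psum Xs n \<omega>"
      using drift
    proof eventually_elim
      case (elim \<omega>)
      then have "ereal x < (SUP n\<in>{1..}. ereal (psum Xs n \<omega>))" by simp
      then show ?case unfolding less_SUP_iff by simp
    qed
    have "AE \<omega> in M. 1 - 2 * indicator Bc \<omega> \<le> cos (s * (SY \<omega> + Wt (x - SX \<omega>) \<omega>))"
      using dn cosW AE_space
    proof eventually_elim
      case (elim \<omega>)
      show ?case
      proof (cases "\<omega> \<in> Bc")
        case True then show ?thesis by simp
      next
        case False
        then have B: "\<forall>j\<in>{1..k}. psum Xs j \<omega> \<le> x" using elim unfolding Bc_def by auto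
        from elim obtain n0 where n0: "n0 \<ge> 1" "x < psum Xs n0 \<omega>" by auto
        have "Wsum Xs Ys x \<omega> = psum Ys k \<omega> + Wsum (\<lambda>i. Xs (k + i)) (\<lambda>i. Ys (k + i)) (x - psum Xs k \<omega>) \<omega>"
          by (rule Wsum_split[OF B n0(2) n0(1)])
        also have "Wsum (\<lambda>i. Xs (k + i)) (\<lambda>i. Ys (k + i)) (x - psum Xs k \<omega>) \<omega> = Wt (x - SX \<omega>) \<omega>"
          unfolding Wt_def SX_def by (rule Wsum_cong) (auto simp: Zs_def Us_def)
        finally have "SY \<omega> + Wt (x - SX \<omega>) \<omega> = Wsum Xs Ys x \<omega>" unfolding SY_def by simp
        then show ?thesis using elim False by simp
      qed
    qed
    moreover have "integrable M (\<lambda>\<omega>. 1 - 2 * indicator Bc \<omega> :: real)"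
      by (intro integrable_const_bound[where B=3]) (auto split: split_indicator)
    moreover have "integrable M (\<lambda>\<omega>. cos (s * (SY \<omega> + Wt (x - SX \<omega>) \<omega>)))"
      using Wt_m1 by (intro integrable_const_bound[where B=1]) auto
    ultimately have "(\<integral>\<omega>. 1 - 2 * indicator Bc \<omega> \<partial>M) \<le> L"
      unfolding L_def by (intro integral_mono_AE) auto
    moreover have "(\<integral>\<omega>. 1 - 2 * indicator Bc \<omega> \<partial>M) = 1 - 2 * measure M Bc"
    proof -
      have ii: "integrable M (\<lambda>\<omega>. indicator Bc \<omega> :: real)" by (rule integrable_real_indicator) (auto simp: less_top[symmetric])
      have "(\<integral>\<omega>. 1 - 2 * indicator Bc \<omega> \<partial>M) = (\<integral>\<omega>. 1 \<partial>M) - (\<integral>\<omega>. (2::real) * indicator Bc \<omega> \<partial>M)"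
        using ii by (intro Bochner_Integration.integral_diff) auto
      also have "\<dots> = 1 - 2 * measure M Bc" using ii by (simp add: prob_space)
      finally show ?thesis .
    qed
    ultimately show ?thesis by simp
  qed
  have E2: "L = (\<integral>\<omega>. cos (s * SY \<omega>) * u1 (SX \<omega>) - sin (s * SY \<omega>) * u2 (SX \<omega>) \<partial>M)"
  proof -
    define N1 where "N1 = (PiM {1..k} (\<lambda>_. borel) :: (nat \<Rightarrow> real \<times> real) measure)"
    define N2 where "N2 = (PiM {k+1..} (\<lambda>_. borel) :: (nat \<Rightarrow> real \<times> real) measure)"
    define R1 where "R1 = (\<lambda>\<omega>. restrict (\<lambda>i. (Xs i \<omega>, Ys i \<omega>)) {1..k})"
    define R2 where "R2 = (\<lambda>\<omega>. restrict (\<lambda>i. (Xs i \<omega>, Ys i \<omega>)) {k+1..})"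
    have ind: "indep_var N1 R1 N2 R2"
      unfolding N1_def N2_def R1_def R2_def
      by (rule indep_var_restrict[OF indep]) auto
    define Zt where "Zt = (\<lambda>i (r::nat \<Rightarrow> real \<times> real). if i = 0 then 0 else fst (r (k + i)))"
    define Ut where "Ut = (\<lambda>i (r::nat \<Rightarrow> real \<times> real). if i = 0 then 0 else snd (r (k + i)))"
    define f where "f = (\<lambda>r1 r2. cos (s * ((\<Sum>i\<in>{1..k}. snd (r1 i)) + Wsum Zt Ut (x - (\<Sum>i\<in>{1..k}. fst (r1 i))) r2)))"
    have fstm: "fst \<in> borel_measurable (borel :: (real \<times> real) measure)"
      and sndm: "snd \<in> borel_measurable (borel :: (real \<times> real) measure)"
      by (intro borel_measurable_continuous_onI continuous_intros)+
    have fm: "(\<lambda>p. f (fst p) (snd p)) \<in> borel_measurable (N1 \<Otimes>\<^sub>M N2)"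
    proof -
      have Ztm: "(\<lambda>p. Zt i (snd p)) \<in> borel_measurable (N1 \<Otimes>\<^sub>M N2)"
        "(\<lambda>p. Ut i (snd p)) \<in> borel_measurable (N1 \<Otimes>\<^sub>M N2)" for i
      proof -
        have c: "(\<lambda>p. snd p (k + i)) \<in> measurable (N1 \<Otimes>\<^sub>M N2) borel" if "i \<noteq> 0"
        proof -
          have "(\<lambda>r. r (k + i)) \<in> measurable N2 borel"
            unfolding N2_def using that by (intro measurable_component_singleton) auto
          then show ?thesis by measurable
        qed
        show "(\<lambda>p. Zt i (snd p)) \<in> borel_measurable (N1 \<Otimes>\<^sub>M N2)"
        proof (cases "i = 0")
          case False
          from measurable_compose[OF c[OF False] fstm] show ?thesis unfolding Zt_def using False by simp
        qed (simp add: Zt_def)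
        show "(\<lambda>p. Ut i (snd p)) \<in> borel_measurable (N1 \<Otimes>\<^sub>M N2)"
        proof (cases "i = 0")
          case False
          from measurable_compose[OF c[OF False] sndm] show ?thesis unfolding Ut_def using False by simp
        qed (simp add: Ut_def)
      qed
      have c1: "(\<lambda>p. fst p i) \<in> measurable (N1 \<Otimes>\<^sub>M N2) borel" if "i \<in> {1..k}" for i
      proof -
        have "(\<lambda>r. r i) \<in> measurable N1 borel"
          unfolding N1_def using that by (intro measurable_component_singleton) auto
        then show ?thesis by measurable
      qed
      have sf: "(\<lambda>p. \<Sum>i\<in>{1..k}. fst (fst p i)) \<in> borel_measurable (N1 \<Otimes>\<^sub>M N2)"
        by (intro borel_measurable_sum measurable_compose[OF c1 fstm])
      have ss: "(\<lambda>p. \<Sum>i\<in>{1..k}. snd (fst p i)) \<in> borel_measurable (N1 \<Otimes>\<^sub>M N2)"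
        by (intro borel_measurable_sum measurable_compose[OF c1 sndm])
      have wm: "(\<lambda>p. Wsum (\<lambda>i p. Zt i (snd p)) (\<lambda>i p. Ut i (snd p)) (x - (\<Sum>i\<in>{1..k}. fst (fst p i))) p)
          \<in> borel_measurable (N1 \<Otimes>\<^sub>M N2)"
        by (rule Wsum_measurable[OF Ztm]) (use sf in measurable)
      have eqf: "(\<lambda>p. Wsum (\<lambda>i p. Zt i (snd p)) (\<lambda>i p. Ut i (snd p)) (x - (\<Sum>i\<in>{1..k}. fst (fst p i))) p)
          = (\<lambda>p. Wsum Zt Ut (x - (\<Sum>i\<in>{1..k}. fst (fst p i))) (snd p))"
        by (intro ext Wsum_cong) auto
      have wm': "(\<lambda>p. Wsum Zt Ut (x - (\<Sum>i\<in>{1..k}. fst (fst p i))) (snd p)) \<in> borel_measurable (N1 \<Otimes>\<^sub>M N2)"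
        using wm unfolding eqf .
      show ?thesis unfolding f_def using wm' ss by measurable
    qed
    have fb: "\<bar>f a b\<bar> \<le> 1" for a b unfolding f_def by simp
    have R1s: "(\<Sum>i\<in>{1..k}. snd (R1 \<omega> i)) = SY \<omega>" "(\<Sum>i\<in>{1..k}. fst (R1 \<omega> i)) = SX \<omega>" for \<omega>
      unfolding R1_def SX_def SY_def psum_def by (auto intro: sum.cong)
    have R2s: "Wsum Zt Ut y (R2 \<omega>) = Wt y \<omega>" for y \<omega>
      unfolding Wt_def by (rule Wsum_cong) (auto simp: Zt_def Ut_def Zs_def Us_def R2_def)
    have "L = (\<integral>\<omega>. f (R1 \<omega>) (R2 \<omega>) \<partial>M)"
      unfolding L_def f_def R1s R2s ..
    also have "\<dots> = (\<integral>\<omega>. (\<integral>\<omega>'. f (R1 \<omega>) (R2 \<omega>') \<partial>M) \<partial>M)"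
      by (rule indep_subst[OF P ind fm fb])
    also have "\<dots> = (\<integral>\<omega>. cos (s * SY \<omega>) * u1 (SX \<omega>) - sin (s * SY \<omega>) * u2 (SX \<omega>) \<partial>M)"
    proof (rule Bochner_Integration.integral_cong)
      show "M = M" ..
    next
      fix \<omega> assume "\<omega> \<in> space M"
      have m: "(\<lambda>\<omega>'. Wt (x - SX \<omega>) \<omega>') \<in> borel_measurable M" unfolding Wt_def by (rule Wsum_measurable) auto
      have i1: "integrable M (\<lambda>\<omega>'. cos (s * Wt (x - SX \<omega>) \<omega>'))"
        using m by (intro integrable_const_bound[where B=1]) auto
      have i2: "integrable M (\<lambda>\<omega>'. sin (s * Wt (x - SX \<omega>) \<omega>'))"
        using m by (intro integrable_const_bound[where B=1]) auto
      have "(\<integral>\<omega>'. f (R1 \<omega>) (R2 \<omega>') \<partial>M) = (\<integral>\<omega>'. cos (s * SY \<omega>) * cos (s * Wt (x - SX \<omega>) \<omega>') - sin (s * SY \<omega>) * sin (s * Wt (x - SX \<omega>) \<omega>') \<partial>M)"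
        unfolding f_def R1s R2s by (simp add: distrib_left cos_add)
      also have "\<dots> = cos (s * SY \<omega>) * u1 (SX \<omega>) - sin (s * SY \<omega>) * u2 (SX \<omega>)"
        unfolding u1_def u2_def using i1 i2 by simp
      finally show "(\<integral>\<omega>'. f (R1 \<omega>) (R2 \<omega>') \<partial>M) = cos (s * SY \<omega>) * u1 (SX \<omega>) - sin (s * SY \<omega>) * u2 (SX \<omega>)" .
    qed
    finally show ?thesis .
  qed
  have E34: "(\<integral>\<omega>. cos (s * SY \<omega>) * u1 (SX \<omega>) - sin (s * SY \<omega>) * u2 (SX \<omega>) \<partial>M) \<le>
    (\<integral>\<omega>. cmod (Complex (real_cond_exp M G (\<lambda>\<omega>. cos (s * SY \<omega>)) \<omega>) (real_cond_exp M G (\<lambda>\<omega>. sin (s * SY \<omega>)) \<omega>)) \<partial>M)"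
  proof -
    define C where "C = real_cond_exp M G (\<lambda>\<omega>. cos (s * SY \<omega>))"
    define Sn where "Sn = real_cond_exp M G (\<lambda>\<omega>. sin (s * SY \<omega>))"
    have u1G: "(\<lambda>\<omega>. u1 (SX \<omega>)) \<in> borel_measurable G" by (rule measurable_compose[OF SXG u1_m])
    have u2G: "(\<lambda>\<omega>. u2 (SX \<omega>)) \<in> borel_measurable G" by (rule measurable_compose[OF SXG u2_m])
    have ic1: "integrable M (\<lambda>\<omega>. u1 (SX \<omega>) * cos (s * SY \<omega>))"
      by (intro integrable_const_bound[where B=1]) (auto simp: abs_mult intro!: mult_le_one u1b)
    have ic2: "integrable M (\<lambda>\<omega>. u2 (SX \<omega>) * sin (s * SY \<omega>))"
      by (intro integrable_const_bound[where B=1]) (auto simp: abs_mult intro!: mult_le_one u2b)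
    have cm: "(\<lambda>\<omega>. cos (s * SY \<omega>)) \<in> borel_measurable M" "(\<lambda>\<omega>. sin (s * SY \<omega>)) \<in> borel_measurable M"
      by measurable
    note r1 = G.real_cond_exp_intg[OF ic1 u1G cm(1)]
    note r2 = G.real_cond_exp_intg[OF ic2 u2G cm(2)]
    have "(\<integral>\<omega>. cos (s * SY \<omega>) * u1 (SX \<omega>) - sin (s * SY \<omega>) * u2 (SX \<omega>) \<partial>M)
        = (\<integral>\<omega>. u1 (SX \<omega>) * cos (s * SY \<omega>) \<partial>M) - (\<integral>\<omega>. u2 (SX \<omega>) * sin (s * SY \<omega>) \<partial>M)"
      using ic1 ic2 by (subst Bochner_Integration.integral_diff[symmetric]) (auto simp: mult.commute)
    also have "\<dots> = (\<integral>\<omega>. u1 (SX \<omega>) * C \<omega> \<partial>M) - (\<integral>\<omega>. u2 (SX \<omega>) * Sn \<omega> \<partial>M)"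
      unfolding C_def Sn_def using r1(2) r2(2) by simp
    also have "\<dots> = (\<integral>\<omega>. u1 (SX \<omega>) * C \<omega> - u2 (SX \<omega>) * Sn \<omega> \<partial>M)"
      using r1(1) r2(1) unfolding C_def Sn_def by simp
    also have "\<dots> \<le> (\<integral>\<omega>. cmod (Complex (C \<omega>) (Sn \<omega>)) \<partial>M)"
    proof (rule integral_mono)
      show "integrable M (\<lambda>\<omega>. u1 (SX \<omega>) * C \<omega> - u2 (SX \<omega>) * Sn \<omega>)"
        using r1(1) r2(1) unfolding C_def Sn_def by simp
      have iC: "integrable M C" "integrable M Sn" unfolding C_def Sn_def
        using cm by (auto intro!: G.real_cond_exp_int(1) integrable_const_bound[where B=1])
      show "integrable M (\<lambda>\<omega>. cmod (Complex (C \<omega>) (Sn \<omega>)))"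
      proof (rule Bochner_Integration.integrable_bound[where f="\<lambda>\<omega>. \<bar>C \<omega>\<bar> + \<bar>Sn \<omega>\<bar>"])
        show "integrable M (\<lambda>\<omega>. \<bar>C \<omega>\<bar> + \<bar>Sn \<omega>\<bar>)" using iC by auto
        show "(\<lambda>\<omega>. cmod (Complex (C \<omega>) (Sn \<omega>))) \<in> borel_measurable M" unfolding complex_norm C_def Sn_def by measurable
        show "AE \<omega> in M. norm (cmod (Complex (C \<omega>) (Sn \<omega>))) \<le> norm (\<bar>C \<omega>\<bar> + \<bar>Sn \<omega>\<bar>)"
          using cmod_le[of "Complex (C _) (Sn _)"] by auto
      qed
      fix \<omega>
      have "C \<omega> * u1 (SX \<omega>) + Sn \<omega> * (- u2 (SX \<omega>)) \<le> sqrt ((C \<omega>)\<^sup>2 + (Sn \<omega>)\<^sup>2) * sqrt ((u1 (SX \<omega>))\<^sup>2 + (- u2 (SX \<omega>))\<^sup>2)"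
        by (rule CS2)
      also have "\<dots> \<le> sqrt ((C \<omega>)\<^sup>2 + (Sn \<omega>)\<^sup>2) * 1"
        using usq[of "SX \<omega>"] by (intro mult_left_mono) auto
      finally show "u1 (SX \<omega>) * C \<omega> - u2 (SX \<omega>) * Sn \<omega> \<le> cmod (Complex (C \<omega>) (Sn \<omega>))"
        by (simp add: complex_norm mult.commute)
    qed
    finally show ?thesis unfolding C_def Sn_def .
  qed
  show ?thesis using E1 E2 E34 unfolding Bc_def G_def SX_def SY_def by simp
qed

lemma (in sigma_finite_subalgebra) rce_abs_int:
  assumes h: "integrable M h"
  shows "(\<integral>x. \<bar>real_cond_exp M F h x\<bar> \<partial>M) \<le> (\<integral>x. \<bar>h x\<bar> \<partial>M)"
proof -
  have ia: "integrable M (\<lambda>x. \<bar>h x\<bar>)" using h by auto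
  have m1: "AE x in M. real_cond_exp M F h x \<le> real_cond_exp M F (\<lambda>x. \<bar>h x\<bar>) x"
    by (rule real_cond_exp_mono) (use h ia in auto)
  have m2: "AE x in M. real_cond_exp M F (\<lambda>x. - h x) x \<le> real_cond_exp M F (\<lambda>x. \<bar>h x\<bar>) x"
    by (rule real_cond_exp_mono) (use h ia in auto)
  have m3: "AE x in M. real_cond_exp M F (\<lambda>x. (-1) * h x) x = (-1) * real_cond_exp M F h x"
    by (rule real_cond_exp_cmult) (rule h)
  have "AE x in M. \<bar>real_cond_exp M F h x\<bar> \<le> real_cond_exp M F (\<lambda>x. \<bar>h x\<bar>) x"
    using m1 m2 m3 by eventually_elim auto
  then have "(\<integral>x. \<bar>real_cond_exp M F h x\<bar> \<partial>M) \<le> (\<integral>x. real_cond_exp M F (\<lambda>x. \<bar>h x\<bar>) x \<partial>M)"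
    using real_cond_exp_int(1)[OF h] real_cond_exp_int(1)[OF ia]
    by (intro integral_mono_AE) auto
  also have "\<dots> = (\<integral>x. \<bar>h x\<bar> \<partial>M)" by (rule real_cond_exp_int(2)[OF ia])
  finally show ?thesis .
qed

lemma tail_to0:
  fixes Z :: "'a \<Rightarrow> real"
  assumes P: "prob_space M" and Z[measurable]: "Z \<in> borel_measurable M"
  shows "((\<lambda>x. measure M {\<omega> \<in> space M. x < Z \<omega>}) \<longlongrightarrow> 0) at_top"
proof -
  interpret prob_space M by (rule P)
  interpret R: real_distribution "distr M borel Z" by (rule real_distribution_distr) simp
  have eq: "measure M {\<omega> \<in> space M. x < Z \<omega>} = 1 - cdf (distr M borel Z) x" for x
  proof -
    have "cdf (distr M borel Z) x = measure M {\<omega> \<in> space M. Z \<omega> \<le> x}"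
      unfolding cdf_def by (subst measure_distr) (auto simp: vimage_def Int_def conj_commute)
    moreover have "measure M {\<omega> \<in> space M. x < Z \<omega>} = 1 - measure M {\<omega> \<in> space M. Z \<omega> \<le> x}"
    proof -
      have e: "space M - {\<omega> \<in> space M. Z \<omega> \<le> x} = {\<omega> \<in> space M. x < Z \<omega>}" by auto
      show ?thesis using prob_compl[of "{\<omega> \<in> space M. Z \<omega> \<le> x}"] unfolding e by simp
    qed
    ultimately show ?thesis by simp
  qed
  have "((\<lambda>x. 1 - cdf (distr M borel Z) x) \<longlongrightarrow> 1 - 1) at_top"
    by (intro tendsto_intros R.cdf_lim_at_top_prob)
  then show ?thesis unfolding eq by simp
qed

lemma Fcont:
  fixes M :: "'a measure" and SX SY :: "'a \<Rightarrow> real"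
  assumes P: "prob_space M" and [measurable]: "SX \<in> borel_measurable M" "SY \<in> borel_measurable M"
  shows "continuous_on UNIV (\<lambda>s. \<integral>\<omega>. cmod (Complex
      (real_cond_exp M (vimage_algebra (space M) SX borel) (\<lambda>\<omega>. cos (s * SY \<omega>)) \<omega>)
      (real_cond_exp M (vimage_algebra (space M) SX borel) (\<lambda>\<omega>. sin (s * SY \<omega>)) \<omega>)) \<partial>M)"
proof -
  interpret prob_space M by (rule P)
  define G where "G = vimage_algebra (space M) SX borel"
  have subG: "subalgebra M G"
  proof -
    have "sets G \<subseteq> sets M" unfolding G_def by (intro sets_image_in_sets) auto
    then show ?thesis unfolding subalgebra_def G_def by simp
  qed
  interpret G: sigma_finite_subalgebra M G
    by (rule finite_measure_subalgebra_is_sigma_finite) (unfold_locales, rule subG)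
  define CE where "CE = (\<lambda>s. real_cond_exp M G (\<lambda>\<omega>. cos (s * SY \<omega>)))"
  define SE where "SE = (\<lambda>s. real_cond_exp M G (\<lambda>\<omega>. sin (s * SY \<omega>)))"
  define Fs where "Fs = (\<lambda>s. \<integral>\<omega>. cmod (Complex (CE s \<omega>) (SE s \<omega>)) \<partial>M)"
  define D where "D = (\<lambda>s0 t. \<integral>\<omega>. \<bar>cos (t * SY \<omega>) - cos (s0 * SY \<omega>)\<bar> + \<bar>sin (t * SY \<omega>) - sin (s0 * SY \<omega>)\<bar> \<partial>M)"
  have ic: "integrable M (\<lambda>\<omega>. cos (s * SY \<omega>))" "integrable M (\<lambda>\<omega>. sin (s * SY \<omega>))" for s
    by (intro integrable_const_bound[where B=1]; simp)+
  have iCE: "integrable M (CE s)" "integrable M (SE s)" for s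
    unfolding CE_def SE_def using ic by (auto intro: G.real_cond_exp_int(1))
  have iF: "integrable M (\<lambda>\<omega>. cmod (Complex (CE s \<omega>) (SE s \<omega>)))" for s
  proof (rule Bochner_Integration.integrable_bound[where f="\<lambda>\<omega>. \<bar>CE s \<omega>\<bar> + \<bar>SE s \<omega>\<bar>"])
    show "integrable M (\<lambda>\<omega>. \<bar>CE s \<omega>\<bar> + \<bar>SE s \<omega>\<bar>)" using iCE by auto
    show "(\<lambda>\<omega>. cmod (Complex (CE s \<omega>) (SE s \<omega>))) \<in> borel_measurable M" unfolding complex_norm CE_def SE_def by measurable
    show "AE \<omega> in M. norm (cmod (Complex (CE s \<omega>) (SE s \<omega>))) \<le> norm (\<bar>CE s \<omega>\<bar> + \<bar>SE s \<omega>\<bar>)"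
      using cmod_le[of "Complex (CE s _) (SE s _)"] by auto
  qed
  have bound: "norm (Fs t - Fs s0) \<le> D s0 t" for s0 t
  proof -
    have dc: "AE \<omega> in M. CE t \<omega> - CE s0 \<omega> = real_cond_exp M G (\<lambda>\<omega>. cos (t * SY \<omega>) - cos (s0 * SY \<omega>)) \<omega>"
      unfolding CE_def using G.real_cond_exp_diff[OF ic(1) ic(1), of t s0] by (auto elim: AE_mp)
    have ds: "AE \<omega> in M. SE t \<omega> - SE s0 \<omega> = real_cond_exp M G (\<lambda>\<omega>. sin (t * SY \<omega>) - sin (s0 * SY \<omega>)) \<omega>"
      unfolding SE_def using G.real_cond_exp_diff[OF ic(2) ic(2), of t s0] by (auto elim: AE_mp)
    have idc: "integrable M (\<lambda>\<omega>. cos (t * SY \<omega>) - cos (s0 * SY \<omega>))" "integrable M (\<lambda>\<omega>. sin (t * SY \<omega>) - sin (s0 * SY \<omega>))"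
      using ic by auto
    have "norm (Fs t - Fs s0) = \<bar>\<integral>\<omega>. cmod (Complex (CE t \<omega>) (SE t \<omega>)) - cmod (Complex (CE s0 \<omega>) (SE s0 \<omega>)) \<partial>M\<bar>"
      unfolding Fs_def using iF by simp
    also have "\<dots> \<le> (\<integral>\<omega>. \<bar>cmod (Complex (CE t \<omega>) (SE t \<omega>)) - cmod (Complex (CE s0 \<omega>) (SE s0 \<omega>))\<bar> \<partial>M)"
      by (rule integral_abs_bound)
    also have "\<dots> \<le> (\<integral>\<omega>. \<bar>CE t \<omega> - CE s0 \<omega>\<bar> + \<bar>SE t \<omega> - SE s0 \<omega>\<bar> \<partial>M)"
    proof (rule integral_mono)
      show "integrable M (\<lambda>\<omega>. \<bar>cmod (Complex (CE t \<omega>) (SE t \<omega>)) - cmod (Complex (CE s0 \<omega>) (SE s0 \<omega>))\<bar>)"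
        using iF by auto
      show "integrable M (\<lambda>\<omega>. \<bar>CE t \<omega> - CE s0 \<omega>\<bar> + \<bar>SE t \<omega> - SE s0 \<omega>\<bar>)" using iCE by auto
      fix \<omega>
      have "\<bar>cmod (Complex (CE t \<omega>) (SE t \<omega>)) - cmod (Complex (CE s0 \<omega>) (SE s0 \<omega>))\<bar>
          \<le> cmod (Complex (CE t \<omega>) (SE t \<omega>) - Complex (CE s0 \<omega>) (SE s0 \<omega>))"
        by (rule norm_triangle_ineq3)
      also have "\<dots> \<le> \<bar>CE t \<omega> - CE s0 \<omega>\<bar> + \<bar>SE t \<omega> - SE s0 \<omega>\<bar>"
        using cmod_le[of "Complex (CE t \<omega>) (SE t \<omega>) - Complex (CE s0 \<omega>) (SE s0 \<omega>)"] by simp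
      finally show "\<bar>cmod (Complex (CE t \<omega>) (SE t \<omega>)) - cmod (Complex (CE s0 \<omega>) (SE s0 \<omega>))\<bar>
          \<le> \<bar>CE t \<omega> - CE s0 \<omega>\<bar> + \<bar>SE t \<omega> - SE s0 \<omega>\<bar>" .
    qed
    also have "\<dots> = (\<integral>\<omega>. \<bar>CE t \<omega> - CE s0 \<omega>\<bar> \<partial>M) + (\<integral>\<omega>. \<bar>SE t \<omega> - SE s0 \<omega>\<bar> \<partial>M)"
      using iCE by (intro Bochner_Integration.integral_add) auto
    also have "(\<integral>\<omega>. \<bar>CE t \<omega> - CE s0 \<omega>\<bar> \<partial>M) = (\<integral>\<omega>. \<bar>real_cond_exp M G (\<lambda>\<omega>. cos (t * SY \<omega>) - cos (s0 * SY \<omega>)) \<omega>\<bar> \<partial>M)"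
      using dc by (intro integral_cong_AE) (auto simp: CE_def)
    also have "\<dots> \<le> (\<integral>\<omega>. \<bar>cos (t * SY \<omega>) - cos (s0 * SY \<omega>)\<bar> \<partial>M)"
      by (rule G.rce_abs_int[OF idc(1)])
    also have "(\<integral>\<omega>. \<bar>SE t \<omega> - SE s0 \<omega>\<bar> \<partial>M) = (\<integral>\<omega>. \<bar>real_cond_exp M G (\<lambda>\<omega>. sin (t * SY \<omega>) - sin (s0 * SY \<omega>)) \<omega>\<bar> \<partial>M)"
      using ds by (intro integral_cong_AE) (auto simp: SE_def)
    also have "\<dots> \<le> (\<integral>\<omega>. \<bar>sin (t * SY \<omega>) - sin (s0 * SY \<omega>)\<bar> \<partial>M)"
      by (rule G.rce_abs_int[OF idc(2)])
    also have "(\<integral>\<omega>. \<bar>cos (t * SY \<omega>) - cos (s0 * SY \<omega>)\<bar> \<partial>M) + (\<integral>\<omega>. \<bar>sin (t * SY \<omega>) - sin (s0 * SY \<omega>)\<bar> \<partial>M) = D s0 t"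
      unfolding D_def using idc by (intro Bochner_Integration.integral_add[symmetric]) auto
    finally show ?thesis by simp
  qed
  have Dlim: "(D s0 \<longlongrightarrow> 0) (at s0)" for s0
  proof (subst tendsto_at_iff_sequentially, intro allI impI)
    fix X :: "nat \<Rightarrow> real" assume "X \<longlonglongrightarrow> s0"
    then have lim: "(\<lambda>i. \<bar>cos (X i * SY \<omega>) - cos (s0 * SY \<omega>)\<bar> + \<bar>sin (X i * SY \<omega>) - sin (s0 * SY \<omega>)\<bar>)
        \<longlonglongrightarrow> \<bar>cos (s0 * SY \<omega>) - cos (s0 * SY \<omega>)\<bar> + \<bar>sin (s0 * SY \<omega>) - sin (s0 * SY \<omega>)\<bar>" for \<omega>
      by (intro tendsto_intros)
    have "(\<lambda>i. \<integral>\<omega>. \<bar>cos (X i * SY \<omega>) - cos (s0 * SY \<omega>)\<bar> + \<bar>sin (X i * SY \<omega>) - sin (s0 * SY \<omega>)\<bar> \<partial>M)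
        \<longlonglongrightarrow> (\<integral>\<omega>. 0 \<partial>M)"
    proof (rule integral_dominated_convergence[where w="\<lambda>_. 4"])
      show "AE \<omega> in M. (\<lambda>i. \<bar>cos (X i * SY \<omega>) - cos (s0 * SY \<omega>)\<bar> + \<bar>sin (X i * SY \<omega>) - sin (s0 * SY \<omega>)\<bar>) \<longlonglongrightarrow> 0"
        using lim by simp
      show "AE \<omega> in M. norm (\<bar>cos (X i * SY \<omega>) - cos (s0 * SY \<omega>)\<bar> + \<bar>sin (X i * SY \<omega>) - sin (s0 * SY \<omega>)\<bar>) \<le> 4" for i
      proof (rule AE_I2)
        fix \<omega>
        have "\<bar>cos (X i * SY \<omega>) - cos (s0 * SY \<omega>)\<bar> \<le> 2" "\<bar>sin (X i * SY \<omega>) - sin (s0 * SY \<omega>)\<bar> \<le> 2"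
          using abs_cos_le_one[of "X i * SY \<omega>"] abs_cos_le_one[of "s0 * SY \<omega>"]
            abs_sin_le_one[of "X i * SY \<omega>"] abs_sin_le_one[of "s0 * SY \<omega>"] by linarith+
        then show "norm (\<bar>cos (X i * SY \<omega>) - cos (s0 * SY \<omega>)\<bar> + \<bar>sin (X i * SY \<omega>) - sin (s0 * SY \<omega>)\<bar>) \<le> 4" by simp
      qed
    qed auto
    then show "(D s0 \<circ> X) \<longlonglongrightarrow> 0" unfolding D_def comp_def by simp
  qed
  have "isCont Fs s0" for s0
  proof -
    have "((\<lambda>t. Fs t - Fs s0) \<longlongrightarrow> 0) (at s0)"
      by (rule Lim_null_comparison[OF always_eventually Dlim]) (use bound in auto)
    then have "(Fs \<longlongrightarrow> Fs s0) (at s0)" by (simp add: LIM_zero_iff)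
    then show ?thesis unfolding isCont_def .
  qed
  then have "continuous_on UNIV Fs" by (intro continuous_at_imp_continuous_on) auto
  then show ?thesis unfolding Fs_def CE_def SE_def G_def .
qed

theorem lemma4p3:
  fixes M :: "'a measure"
    and X Y :: "'a \<Rightarrow> real"
    and Xs Ys :: "nat \<Rightarrow> 'a \<Rightarrow> real"
    and d \<tau>0 :: real
    and \<Phi> \<Psi> :: "real measure"
  assumes P: "prob_space M"
    and X_meas: "X \<in> borel_measurable M" and Y_meas: "Y \<in> borel_measurable M"
    and Xs_meas: "\<And>i. Xs i \<in> borel_measurable M" and Ys_meas: "\<And>i. Ys i \<in> borel_measurable M"
    and indep: "prob_space.indep_vars M (\<lambda>_. borel) (\<lambda>i \<omega>. (Xs i \<omega>, Ys i \<omega>)) {1..}"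
    and ident: "\<And>i. i \<ge> 1 \<Longrightarrow>
        distr M borel (\<lambda>\<omega>. (Xs i \<omega>, Ys i \<omega>)) = distr M borel (\<lambda>\<omega>. (X \<omega>, Y \<omega>))"
    and X_nondeg: "\<not> (\<exists>c. AE \<omega> in M. X \<omega> = c)"
    and Y_nondeg: "\<not> (\<exists>c. AE \<omega> in M. Y \<omega> = c)"
    and drift: "AE \<omega> in M. (SUP n\<in>{1..}. ereal (psum Xs n \<omega>)) = \<infinity>"
    and span: "has_span M Y d"
    and tau_pos: "\<tau>0 > 0"
    and h_range: "betaX M X < hfun M X Y \<tau>0" "hfun M X Y \<tau>0 < \<infinity>"
    and inf_lt: "(INF s. \<integral>\<^sup>+ \<omega>. ennreal (exp (\<tau>0 * Y \<omega> + s * X \<omega>)) \<partial>M) < 1"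
    \<comment> \<open>(1)\<close>
    and Phi_sets: "sets \<Phi> = sets borel" and Psi_sets: "sets \<Psi> = sets borel"
    and law_split: "\<And>A. A \<in> sets borel \<Longrightarrow>
        emeasure (distr M borel X) A = emeasure \<Phi> A + emeasure \<Psi> A"
    and Phi_pos: "emeasure \<Phi> UNIV > 0"
    and Phi_C2: "\<exists>\<phi> \<phi>' \<phi>''. \<Phi> = density lborel (\<lambda>x. ennreal (\<phi> x)) \<and> (\<forall>x. \<phi> x \<ge> 0) \<and>
        (\<forall>x. (\<phi> has_real_derivative \<phi>' x) (at x)) \<and>
        (\<forall>x. (\<phi>' has_real_derivative \<phi>'' x) (at x)) \<and> continuous_on UNIV \<phi>''"
    \<comment> \<open>(2) and (3)\<close>
    and cond23: "\<exists>(k::nat) \<eta>0. \<eta>0 > 0 \<and>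
        (\<forall>s. 0 < s \<and> s \<le> pi / d \<longrightarrow>
          (let F = vimage_algebra (space M) (psum Xs k) borel in
           (\<integral>\<omega>. cmod (Complex (real_cond_exp M F (\<lambda>\<omega>. cos (s * psum Ys k \<omega>)) \<omega>)
                               (real_cond_exp M F (\<lambda>\<omega>. sin (s * psum Ys k \<omega>)) \<omega>)) \<partial>M) < 1)) \<and>
        (\<integral>\<^sup>+ \<omega>. ennreal (exp (- real_of_ereal (hfun M X Y \<tau>0) * X \<omega> + \<tau>0 * Y \<omega>
                              + \<eta>0 * (\<bar>X \<omega>\<bar> + \<bar>Y \<omega>\<bar>))) \<partial>M) < \<infinity> \<and>
        (\<exists>g g1 g2 :: real \<Rightarrow> real \<Rightarrow> real.
           (\<forall>t\<in>{\<tau>0 - \<eta>0 <..< \<tau>0 + \<eta>0}. cond_version M X (\<lambda>\<omega>. exp (t * Y \<omega>)) (g t)) \<and>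
           (\<forall>t\<in>{\<tau>0 - \<eta>0 <..< \<tau>0 + \<eta>0}. \<forall>x\<in>interior (msupport \<Phi>).
              (g t has_real_derivative g1 t x) (at x) \<and> (g1 t has_real_derivative g2 t x) (at x)) \<and>
           continuous_on ({\<tau>0 - \<eta>0 <..< \<tau>0 + \<eta>0} \<times> interior (msupport \<Phi>)) (\<lambda>(t, x). g t x) \<and>
           continuous_on ({\<tau>0 - \<eta>0 <..< \<tau>0 + \<eta>0} \<times> interior (msupport \<Phi>)) (\<lambda>(t, x). g1 t x) \<and>
           continuous_on ({\<tau>0 - \<eta>0 <..< \<tau>0 + \<eta>0} \<times> interior (msupport \<Phi>)) (\<lambda>(t, x). g2 t x))"
    \<comment> \<open>(4)\<close>
    and cond4: "measure M {\<omega> \<in> space M. X \<omega> \<ge> 0} < 1 \<Longrightarrow>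
        (\<forall>q>0. cond_exp_event M
             (\<lambda>\<omega>. exp (q * (\<tau>0 * Y \<omega> - min 0 (real_of_ereal (hfun M X Y \<tau>0)) * X \<omega>)))
             {\<omega> \<in> space M. X \<omega> > 0} < \<infinity>)"
  shows "\<forall>\<^sub>F x in at_top. has_span M (Wsum Xs Ys x) d"
proof -
  interpret prob_space M by (rule P)
  have dpos: "d > 0" and Ylat: "AE \<omega> in M. \<exists>k::int. Y \<omega> = d * of_int k"
    using span unfolding has_span_def lattice_ok_def by auto
  have Yslat: "AE \<omega> in M. \<forall>i\<in>{1..}. \<exists>k::int. Ys i \<omega> = d * of_int k"
    by (rule Ys_lattice[OF P Y_meas X_meas Xs_meas Ys_meas ident Ylat])
  obtain k :: nat and \<eta>0 :: real where H0: "\<forall>s. 0 < s \<and> s \<le> pi / d \<longrightarrow>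
          (let F = vimage_algebra (space M) (psum Xs k) borel in
           (\<integral>\<omega>. cmod (Complex (real_cond_exp M F (\<lambda>\<omega>. cos (s * psum Ys k \<omega>)) \<omega>)
                               (real_cond_exp M F (\<lambda>\<omega>. sin (s * psum Ys k \<omega>)) \<omega>)) \<partial>M) < 1)"
    using cond23 by blast
  define Fk where "Fk = (\<lambda>s. \<integral>\<omega>. cmod (Complex
      (real_cond_exp M (vimage_algebra (space M) (psum Xs k) borel) (\<lambda>\<omega>. cos (s * psum Ys k \<omega>)) \<omega>)
      (real_cond_exp M (vimage_algebra (space M) (psum Xs k) borel) (\<lambda>\<omega>. sin (s * psum Ys k \<omega>)) \<omega>)) \<partial>M)"
  have H: "0 < s \<Longrightarrow> s \<le> pi / d \<Longrightarrow> Fk s < 1" for s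
    using H0 unfolding Fk_def Let_def by blast
  have psm: "psum Xs k \<in> borel_measurable M" "psum Ys k \<in> borel_measurable M"
    using Xs_meas Ys_meas by (auto intro: psum_measurable)
  have cont: "continuous_on UNIV Fk" unfolding Fk_def by (rule Fcont[OF P psm])
  have "\<exists>s\<in>{pi / (2 * d)..pi / d}. \<forall>t\<in>{pi / (2 * d)..pi / d}. Fk t \<le> Fk s"
  proof (rule continuous_attains_sup)
    show "compact {pi / (2 * d)..pi / d}" by simp
    show "{pi / (2 * d)..pi / d} \<noteq> {}" using dpos by (simp add: divide_le_cancel) (simp add: field_simps)
    show "continuous_on {pi / (2 * d)..pi / d} Fk" using cont by (rule continuous_on_subset) simp
  qed
  then obtain s0 where s0: "s0 \<in> {pi / (2 * d)..pi / d}" and smax: "\<And>t. t \<in> {pi / (2 * d)..pi / d} \<Longrightarrow> Fk t \<le> Fk s0"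
    by blast
  define c where "c = Fk s0"
  have s0pos: "0 < s0" using s0 dpos by (auto intro: less_le_trans[of 0 "pi / (2 * d)"])
  have c1: "c < 1" unfolding c_def using H[OF s0pos] s0 by simp
  define Bc where "Bc = (\<lambda>x. {\<omega> \<in> space M. \<not> (\<forall>j\<in>{1..k}. psum Xs j \<omega> \<le> x)})"
  have Bc_le: "measure M (Bc x) \<le> (\<Sum>j\<in>{1..k}. measure M {\<omega> \<in> space M. x < psum Xs j \<omega>})" for x
  proof -
    have "Bc x = (\<Union>j\<in>{1..k}. {\<omega> \<in> space M. x < psum Xs j \<omega>})" unfolding Bc_def by (auto simp: not_le)
    also have "measure M \<dots> \<le> (\<Sum>j\<in>{1..k}. measure M {\<omega> \<in> space M. x < psum Xs j \<omega>})"
    proof (rule measure_UNION_le)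
      fix j
      have "psum Xs j \<in> borel_measurable M" using Xs_meas by (auto intro: psum_measurable)
      then show "{\<omega> \<in> space M. x < psum Xs j \<omega>} \<in> sets M" by measurable
    qed simp
    finally show ?thesis .
  qed
  have "((\<lambda>x. \<Sum>j\<in>{1..k}. measure M {\<omega> \<in> space M. x < psum Xs j \<omega>}) \<longlongrightarrow> (\<Sum>j\<in>{1..k}. 0)) at_top"
  proof (rule tendsto_sum)
    fix j
    have "psum Xs j \<in> borel_measurable M" using Xs_meas by (auto intro: psum_measurable)
    then show "((\<lambda>x. measure M {\<omega> \<in> space M. x < psum Xs j \<omega>}) \<longlongrightarrow> 0) at_top"
      by (rule tail_to0[OF P])
  qed
  then have "\<forall>\<^sub>F x in at_top. (\<Sum>j\<in>{1..k}. measure M {\<omega> \<in> space M. x < psum Xs j \<omega>}) < (1 - c) / 2"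
    using c1 by (intro order_tendstoD(2)) auto
  then show ?thesis
  proof (rule eventually_mono)
    fix x assume small: "(\<Sum>j\<in>{1..k}. measure M {\<omega> \<in> space M. x < psum Xs j \<omega>}) < (1 - c) / 2"
    have Wlat: "AE \<omega> in M. \<exists>k::int. Wsum Xs Ys x \<omega> = d * of_int k"
      by (rule W_lattice[OF Yslat])
    show "has_span M (Wsum Xs Ys x) d"
      unfolding has_span_def
    proof (intro conjI allI impI)
      show "lattice_ok M (Wsum Xs Ys x) d" unfolding lattice_ok_def using dpos Wlat by simp
      fix t assume "lattice_ok M (Wsum Xs Ys x) t"
      then have tpos: "t > 0" and Wt: "AE \<omega> in M. \<exists>k::int. Wsum Xs Ys x \<omega> = t * of_int k"
        unfolding lattice_ok_def by auto
      show "t \<le> d"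
      proof (rule ccontr)
        assume "\<not> t \<le> d"
        then have td: "d < t" by simp
        obtain s where sb: "pi / (2 * d) \<le> s" "s \<le> pi / d" and cosW: "AE \<omega> in M. cos (s * Wsum Xs Ys x \<omega>) = 1"
          using span_multiple[OF dpos td Wt Wlat] by blast
        have kb: "1 - 2 * measure M (Bc x) \<le> Fk s"
          unfolding Bc_def Fk_def by (rule keybound[OF P Xs_meas Ys_meas indep drift cosW])
        have f1: "Fk s \<le> c" unfolding c_def using smax sb by simp
        have f2: "measure M (Bc x) < (1 - c) / 2" using Bc_le[of x] small by linarith
        then have f3: "2 * measure M (Bc x) < 1 - c" by (simp add: field_simps)
        show False using kb f1 f3 by linarith
      qed
    qed
  qed
qed

end
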